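(* For every $n\ge 1$, the optimal value $E(n)$ of the linear program $$\text{minimize } \sum_{u\in\mathbb{F}_2^n}x_u \quad\text{subject to}\quad 0\le x_u\le 1\ (u\in\mathbb{F}_2^n),\qquad x_v+\sum_{\substack{u\in\mathbb{F}_2^n,\ u\supset v\\ \mathrm{dist}(u,v)=1}}x_u\ \ge\ 1\ \ \text{for all } v\in\mathbb{F}_2^n,$$ is $$E(n)=(-1)^n\,n!\,\{R_n(2)-R_n(1)R_{n-1}(1)\},\qquad\text{where } R_n(x)=\sum_{k=0}^n\frac{(-x)^k}{k!}.$$
   Context: Subsets of an $n$-set are identified with their indicator vectors in $\mathbb{F}_2^n$; $u\supset v$ means the support of $u$ contains the support of $v$, and dist denotes Hamming distance. $R_n(x)$ is the degree-$n$ partial sum of the Taylor series of $e^{-x}$. *)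

theory Defs
  imports Complex_Main
begin

text \<open>Vectors of F_2^n are identified with subsets of {0..<n} (their supports).\<close>

definition hamming_dist :: "nat set \<Rightarrow> nat set \<Rightarrow> nat" where
  "hamming_dist u v = card ((u - v) \<union> (v - u))"

definition lp_feasible :: "nat \<Rightarrow> (nat set \<Rightarrow> real) \<Rightarrow> bool" where
  "lp_feasible n x \<longleftrightarrow>
     (\<forall>u\<in>Pow {..<n}. 0 \<le> x u \<and> x u \<le> 1) \<and>
     (\<forall>v\<in>Pow {..<n}.
        x v + (\<Sum>u\<in>{u\<in>Pow {..<n}. v \<subseteq> u \<and> hamming_dist u v = 1}. x u) \<ge> 1)"

definition lp_objective :: "nat \<Rightarrow> (nat set \<Rightarrow> real) \<Rightarrow> real" where
  "lp_objective n x = (\<Sum>u\<in>Pow {..<n}. x u)"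

definition E :: "nat \<Rightarrow> real" where
  "E n = (INF x\<in>{x. lp_feasible n x}. lp_objective n x)"

definition R :: "nat \<Rightarrow> real \<Rightarrow> real" where
  "R n x = (\<Sum>k=0..n. (-x) ^ k / fact k)"

end

theory Submission imports Defs begin

definition g :: "nat \<Rightarrow> nat \<Rightarrow> real" where
  "g a b = (-1) ^ (a + b) / (fact a * fact b)"

lemma pow2_term: "(-2::real) ^ k / fact k = (\<Sum>a\<le>k. g a (k - a))"
proof -
  have "(-2::real) ^ k = ((-1) + (-1)) ^ k" by simp
  also have "\<dots> = (\<Sum>a\<le>k. of_nat (k choose a) * (-1) ^ a * (-1) ^ (k - a))"
    by (rule binomial_ring)
  finally have "(-2::real) ^ k / fact k = (\<Sum>a\<le>k. of_nat (k choose a) * (-1) ^ a * (-1) ^ (k - a) / fact k)"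
    by (simp add: sum_divide_distrib)
  also have "\<dots> = (\<Sum>a\<le>k. g a (k - a))"
  proof (rule sum.cong)
    fix a assume "a \<in> {..k}"
    then have ak: "a \<le> k" by simp
    have "(-1::real) ^ a * (-1) ^ (k - a) = (-1) ^ (a + (k - a))" by (simp add: power_add)
    then show "of_nat (k choose a) * (-1) ^ a * (-1) ^ (k - a) / fact k = g a (k - a)"
      using ak by (simp add: binomial_fact g_def field_simps)
  qed simp
  finally show ?thesis .
qed

lemma R2: "R n 2 = (\<Sum>a\<le>n. \<Sum>b\<le>n. if a + b \<le> n then g a b else 0)"
proof -
  have "R n 2 = (\<Sum>k\<le>n. \<Sum>a\<le>k. g a (k - a))"
    unfolding R_def using pow2_term by (simp add: atLeast0AtMost)
  also have "\<dots> = (\<Sum>(a,b)\<in>{(i,j). i+j \<le> n}. g a b)"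
    by (rule sum.triangle_reindex_eq[symmetric])
  also have "{(i,j). i+j \<le> n} = Sigma {..n} (\<lambda>a. {b\<in>{..n}. a + b \<le> n})" by auto
  also have "(\<Sum>(a,b)\<in>Sigma {..n} (\<lambda>a. {b\<in>{..n}. a + b \<le> n}). g a b)
     = (\<Sum>a\<le>n. \<Sum>b\<in>{b\<in>{..n}. a + b \<le> n}. g a b)"
    by (rule sum.Sigma[symmetric]) auto
  also have "\<dots> = (\<Sum>a\<le>n. \<Sum>b\<le>n. if a + b \<le> n then g a b else 0)"
    by (rule sum.cong[OF refl], rule sum.inter_filter) simp
  finally show ?thesis .
qed

lemma R1prod: "R n 1 * R (n - 1) 1 = (\<Sum>a<n. \<Sum>b\<le>n. g a b)" if "n \<ge> 1"
proof -
  have "R n 1 * R (n - 1) 1 = (\<Sum>a\<le>n-1. (-1)^a / fact a) * (\<Sum>b\<le>n. (-1)^b / fact b)"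
    unfolding R_def by (simp add: atLeast0AtMost)
  also have "\<dots> = (\<Sum>a\<le>n-1. \<Sum>b\<le>n. g a b)"
    by (simp add: sum_product g_def power_add)
  also have "{..n-1} = {..<n}" using that by auto
  finally show ?thesis .
qed

fun Yr :: "nat \<Rightarrow> nat \<Rightarrow> real" where
  "Yr n 0 = 0"
| "Yr n (Suc k) = (1 - Yr n k) / real (n - k)"

lemma Yr_closed: "k \<le> n \<Longrightarrow> Yr n k = (\<Sum>j<k. (-1) ^ (k + j + 1) * fact (n - k) / fact (n - j))"
proof (induction k)
  case 0
  then show ?case by simp
next
  case (Suc k)
  then have kn: "k < n" by simp
  have f: "fact (n - k) = real (n - k) * fact (n - Suc k)"
    using kn by (metis Suc_diff_Suc fact_Suc of_nat_Suc)
  have pos: "real (n - k) > 0" using kn by simp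
  define S where "S = (\<Sum>j<k. (-1) ^ (k + j + 1) * fact (n - k) / fact (n - j) :: real)"
  define S' where "S' = (\<Sum>j<k. (-1) ^ (Suc k + j + 1) * fact (n - Suc k) / fact (n - j) :: real)"
  have SS: "S / real (n - k) = - S'"
    unfolding S_def S'_def sum_divide_distrib sum_negf[symmetric]
    by (rule sum.cong) (use pos in \<open>simp_all add: f\<close>)
  have "Yr n (Suc k) = (1 - S) / real (n - k)"
    using Suc kn by (simp add: S_def)
  also have "\<dots> = 1 / real (n - k) + S'"
    using SS by (simp add: diff_divide_distrib)
  also have "1 / real (n - k) = (-1) ^ (Suc k + k + 1) * fact (n - Suc k) / fact (n - k)"
    using pos by (simp add: f)
  finally show ?case by (simp add: S'_def)
qed

lemma sign_aux: "j \<le> n \<Longrightarrow> (-1::real) ^ (k + j) = (-1) ^ n * (-1) ^ (k + (n - j))"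
proof -
  assume jn: "j \<le> n"
  have e: "n + (k + (n - j)) = (k + j) + 2 * (n - j)" using jn by simp
  have "(-1::real) ^ n * (-1) ^ (k + (n - j)) = (-1) ^ (n + (k + (n - j)))" by (simp add: power_add)
  also have "\<dots> = (-1) ^ ((k + j) + 2 * (n - j))" by (simp only: e)
  also have "\<dots> = (-1) ^ (k + j)" by (simp add: power_add power_mult)
  finally show ?thesis by simp
qed

lemma binom_Yr:
  assumes "k < n"
  shows "of_nat (n choose k) * Yr n k = - ((-1) ^ n * fact n) * (\<Sum>b\<le>n. if n < k + b then g k b else 0)"
proof -
  have "of_nat (n choose k) * Yr n k = (\<Sum>j<k. - ((-1) ^ n * fact n) * g k (n - j))"
    unfolding Yr_closed[OF less_imp_le[OF assms]] sum_distrib_left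
  proof (rule sum.cong[OF refl])
    fix j assume "j \<in> {..<k}"
    then have jn: "j \<le> n" using assms by simp
    show "of_nat (n choose k) * ((-1) ^ (k + j + 1) * fact (n - k) / fact (n - j)) = - ((-1) ^ n * fact n) * g k (n - j)"
      using assms by (simp add: binomial_fact g_def sign_aux[OF jn])
  qed
  also have "\<dots> = - ((-1) ^ n * fact n) * (\<Sum>j<k. g k (n - j))"
    by (simp add: sum_distrib_left)
  also have "(\<Sum>j<k. g k (n - j)) = (\<Sum>b\<in>(\<lambda>j. n - j) ` {..<k}. g k b)"
    by (subst sum.reindex) (use assms in \<open>auto simp: inj_on_def\<close>)
  also have "(\<lambda>j. n - j) ` {..<k} = {b\<in>{..n}. n < k + b}"
  proof
    show "{b\<in>{..n}. n < k + b} \<subseteq> (\<lambda>j. n - j) ` {..<k}"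
    proof
      fix b assume "b \<in> {b\<in>{..n}. n < k + b}"
      then have "b = n - (n - b)" "n - b \<in> {..<k}" by auto
      then show "b \<in> (\<lambda>j. n - j) ` {..<k}" by blast
    qed
  qed (use assms in auto)
  also have "(\<Sum>b\<in>{b\<in>{..n}. n < k + b}. g k b) = (\<Sum>b\<le>n. if n < k + b then g k b else 0)"
    by (rule sum.inter_filter) simp
  finally show ?thesis .
qed

lemma final_identity:
  assumes "n \<ge> 1"
  shows "1 + (\<Sum>k<n. of_nat (n choose k) * Yr n k) = (-1) ^ n * fact n * (R n 2 - R n 1 * R (n - 1) 1)"
proof -
  define Q where "Q = (\<Sum>a<n. \<Sum>b\<le>n. if n < a + b then g a b else 0)"
  have "(\<Sum>k<n. of_nat (n choose k) * Yr n k) = (\<Sum>k<n. - ((-1) ^ n * fact n) * (\<Sum>b\<le>n. if n < k + b then g k b else 0))"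
    by (rule sum.cong) (simp_all add: binom_Yr)
  also have "\<dots> = - ((-1) ^ n * fact n) * Q"
    by (simp add: Q_def sum_distrib_left)
  finally have L: "(\<Sum>k<n. of_nat (n choose k) * Yr n k) = - ((-1) ^ n * fact n) * Q" .
  have An: "{..n} = insert n {..<n}" by auto
  have gn: "(\<Sum>b\<le>n. if n + b \<le> n then g n b else 0) = (-1) ^ n / fact n"
  proof -
    have "(\<Sum>b\<le>n. if n + b \<le> n then g n b else 0) = (\<Sum>b\<le>n. if b = 0 then g n b else 0)"
      by (rule sum.cong) auto
    also have "\<dots> = g n 0" by (simp add: sum.delta)
    finally show ?thesis by (simp add: g_def)
  qed
  have "R n 2 = (-1) ^ n / fact n + (\<Sum>a<n. \<Sum>b\<le>n. if a + b \<le> n then g a b else 0)"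
  proof -
    have sp: "\<And>F. (\<Sum>a\<le>n. F a) = F n + (\<Sum>a<n. F a :: real)" by (simp add: An)
    show ?thesis unfolding R2 by (subst sp) (simp only: gn)
  qed
  then have "R n 2 - R n 1 * R (n - 1) 1 = (-1) ^ n / fact n
      + (\<Sum>a<n. (\<Sum>b\<le>n. if a + b \<le> n then g a b else 0) - (\<Sum>b\<le>n. g a b))"
    using R1prod[OF assms] by (simp add: sum_subtractf)
  also have "(\<Sum>a<n. (\<Sum>b\<le>n. if a + b \<le> n then g a b else 0) - (\<Sum>b\<le>n. g a b)) = - Q"
    unfolding Q_def sum_negf[symmetric] sum_subtractf[symmetric]
    by (intro sum.cong refl) auto
  finally have D: "R n 2 - R n 1 * R (n - 1) 1 = (-1) ^ n / fact n - Q" by simp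
  have ss: "((-1::real) ^ n) * (-1) ^ n = 1"
    by (simp add: power_add[symmetric])
  have fne: "fact n \<noteq> (0::real)" by simp
  have "(-1) ^ n * fact n * ((-1) ^ n / fact n - Q) = (-1) ^ n * (-1) ^ n - (-1) ^ n * fact n * (Q::real)"
    using fne by (simp add: field_simps)
  then show ?thesis unfolding D L using ss by simp
qed

lemma hd_insert: "i \<notin> v \<Longrightarrow> hamming_dist (insert i v) v = 1"
proof -
  assume "i \<notin> v"
  then have "(insert i v - v) \<union> (v - insert i v) = {i}" by auto
  then show ?thesis by (simp add: hamming_dist_def)
qed

lemma up_eq:
  assumes "v \<subseteq> {..<n}"
  shows "{u\<in>Pow {..<n}. v \<subseteq> u \<and> hamming_dist u v = 1} = (\<lambda>i. insert i v) ` ({..<n} - v)"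
proof
  show "(\<lambda>i. insert i v) ` ({..<n} - v) \<subseteq> {u\<in>Pow {..<n}. v \<subseteq> u \<and> hamming_dist u v = 1}"
    using assms hd_insert by auto
next
  show "{u\<in>Pow {..<n}. v \<subseteq> u \<and> hamming_dist u v = 1} \<subseteq> (\<lambda>i. insert i v) ` ({..<n} - v)"
  proof
    fix u assume u: "u \<in> {u\<in>Pow {..<n}. v \<subseteq> u \<and> hamming_dist u v = 1}"
    then have "v - u = {}" by auto
    with u have "card (u - v) = 1" by (simp add: hamming_dist_def)
    then obtain i where i: "u - v = {i}" by (auto simp: card_1_singleton_iff)
    then have "u = insert i v" "i \<in> {..<n} - v" using u by auto
    then show "u \<in> (\<lambda>i. insert i v) ` ({..<n} - v)" by blast
  qed
qed

lemma down_eq: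
  assumes "u \<subseteq> {..<n}"
  shows "{v\<in>Pow {..<n}. v \<subseteq> u \<and> hamming_dist u v = 1} = (\<lambda>i. u - {i}) ` u"
proof
  show "(\<lambda>i. u - {i}) ` u \<subseteq> {v\<in>Pow {..<n}. v \<subseteq> u \<and> hamming_dist u v = 1}"
  proof
    fix v assume "v \<in> (\<lambda>i. u - {i}) ` u"
    then obtain i where i: "i \<in> u" "v = u - {i}" by auto
    have ui: "u = insert i (u - {i})" using i by (simp add: insert_absorb)
    have "hamming_dist (insert i (u - {i})) (u - {i}) = 1" by (rule hd_insert) simp
    then have "hamming_dist u v = 1" using ui i(2) by metis
    then show "v \<in> {v\<in>Pow {..<n}. v \<subseteq> u \<and> hamming_dist u v = 1}" using i assms by auto
  qed
next
  show "{v\<in>Pow {..<n}. v \<subseteq> u \<and> hamming_dist u v = 1} \<subseteq> (\<lambda>i. u - {i}) ` u"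
  proof
    fix v assume v: "v \<in> {v\<in>Pow {..<n}. v \<subseteq> u \<and> hamming_dist u v = 1}"
    then have "v - u = {}" by auto
    with v have "card (u - v) = 1" by (simp add: hamming_dist_def)
    then obtain i where i: "u - v = {i}" by (auto simp: card_1_singleton_iff)
    then have "v = u - {i}" "i \<in> u" using v by auto
    then show "v \<in> (\<lambda>i. u - {i}) ` u" by blast
  qed
qed

lemma sum_up:
  assumes "v \<subseteq> {..<n}"
  shows "(\<Sum>u\<in>{u\<in>Pow {..<n}. v \<subseteq> u \<and> hamming_dist u v = 1}. f (card u))
         = real (n - card v) * f (card v + 1)"
proof -
  have fv: "finite v" using assms finite_subset by blast
  have inj: "inj_on (\<lambda>i. insert i v) ({..<n} - v)"
    by (auto simp: inj_on_def)
  have "(\<Sum>u\<in>{u\<in>Pow {..<n}. v \<subseteq> u \<and> hamming_dist u v = 1}. f (card u))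
      = (\<Sum>i\<in>{..<n} - v. f (card (insert i v)))"
    unfolding up_eq[OF assms] by (simp add: sum.reindex[OF inj])
  also have "\<dots> = (\<Sum>i\<in>{..<n} - v. f (card v + 1))"
    using fv by (intro sum.cong) auto
  also have "\<dots> = real (n - card v) * f (card v + 1)"
    using assms by (simp add: card_Diff_subset fv)
  finally show ?thesis .
qed

lemma sum_down:
  assumes "u \<subseteq> {..<n}"
  shows "(\<Sum>v\<in>{v\<in>Pow {..<n}. v \<subseteq> u \<and> hamming_dist u v = 1}. f (card v))
         = real (card u) * f (card u - 1)"
proof -
  have fu: "finite u" using assms finite_subset by blast
  have inj: "inj_on (\<lambda>i. u - {i}) u"
    by (auto simp: inj_on_def)
  have "(\<Sum>v\<in>{v\<in>Pow {..<n}. v \<subseteq> u \<and> hamming_dist u v = 1}. f (card v))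
      = (\<Sum>i\<in>u. f (card (u - {i})))"
    unfolding down_eq[OF assms] by (simp add: sum.reindex[OF inj])
  also have "\<dots> = (\<Sum>i\<in>u. f (card u - 1))"
    using fu by (intro sum.cong) auto
  also have "\<dots> = real (card u) * f (card u - 1)"
    by simp
  finally show ?thesis .
qed

lemma key_identity:
  fixes x :: "nat set \<Rightarrow> real" and z :: "nat \<Rightarrow> real"
  shows "(\<Sum>u\<in>Pow {..<n}. x u * (z (card u) + real (card u) * z (card u - 1)))
       = (\<Sum>v\<in>Pow {..<n}. z (card v) * (x v + (\<Sum>u\<in>{u\<in>Pow {..<n}. v \<subseteq> u \<and> hamming_dist u v = 1}. x u)))"
proof -
  have "(\<Sum>u\<in>Pow {..<n}. x u * (real (card u) * z (card u - 1)))
      = (\<Sum>u\<in>Pow {..<n}. \<Sum>v\<in>{v\<in>Pow {..<n}. v \<subseteq> u \<and> hamming_dist u v = 1}. x u * z (card v))"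
  proof (rule sum.cong[OF refl])
    fix u assume "u \<in> Pow {..<n}"
    then have "u \<subseteq> {..<n}" by simp
    then show "x u * (real (card u) * z (card u - 1))
      = (\<Sum>v\<in>{v\<in>Pow {..<n}. v \<subseteq> u \<and> hamming_dist u v = 1}. x u * z (card v))"
      by (simp only: sum_distrib_left[symmetric] sum_down[of u n z])
  qed
  also have "\<dots> = (\<Sum>v\<in>Pow {..<n}. \<Sum>u\<in>{u\<in>Pow {..<n}. v \<subseteq> u \<and> hamming_dist u v = 1}. x u * z (card v))"
    by (rule sum.swap_restrict) auto
  also have "\<dots> = (\<Sum>v\<in>Pow {..<n}. z (card v) * (\<Sum>u\<in>{u\<in>Pow {..<n}. v \<subseteq> u \<and> hamming_dist u v = 1}. x u))"
    by (simp add: sum_distrib_left mult.commute)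
  finally show ?thesis
    by (simp add: distrib_left distrib_right sum.distrib mult.commute)
qed

lemma sum_card:
  fixes f :: "nat \<Rightarrow> real"
  shows "(\<Sum>u\<in>Pow {..<n}. f (card u)) = (\<Sum>k\<le>n. of_nat (n choose k) * f k)"
proof -
  have "(\<Sum>u\<in>Pow {..<n}. f (card u)) = (\<Sum>k\<le>n. \<Sum>u\<in>{u. u \<in> Pow {..<n} \<and> card u = k}. f (card u))"
    by (rule sum.group[symmetric]) (auto intro: card_mono[of "{..<n}", simplified])
  also have "\<dots> = (\<Sum>k\<le>n. of_nat (n choose k) * f k)"
  proof (rule sum.cong[OF refl])
    fix k
    have "{u. u \<in> Pow {..<n} \<and> card u = k} = {B. B \<subseteq> {..<n} \<and> card B = k}" by auto
    then have c: "card {u. u \<in> Pow {..<n} \<and> card u = k} = n choose k"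
      by (simp add: n_subsets)
    have "(\<Sum>u\<in>{u. u \<in> Pow {..<n} \<and> card u = k}. f (card u)) = (\<Sum>u\<in>{u. u \<in> Pow {..<n} \<and> card u = k}. f k)"
      by (rule sum.cong) auto
    then show "(\<Sum>u\<in>{u. u \<in> Pow {..<n} \<and> card u = k}. f (card u)) = of_nat (n choose k) * f k"
      using c by simp
  qed
  finally show ?thesis .
qed

definition Yv :: "nat \<Rightarrow> nat \<Rightarrow> real" where
  "Yv n k = (if n \<le> k then 1 else Yr n k)"

fun Zr :: "nat \<Rightarrow> nat \<Rightarrow> real" where
  "Zr n 0 = 0"
| "Zr n (Suc m) = (1 - Zr n m) / real (n - 1 - m)"

definition Zv :: "nat \<Rightarrow> nat \<Rightarrow> real" where
  "Zv n k = (if n \<le> k then 1 else Zr n (n - 1 - k))"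

lemma step_bounds:
  fixes y :: real and d :: nat
  assumes "0 \<le> y" "y \<le> 1"
  shows "0 \<le> (1 - y) / real d \<and> (1 - y) / real d \<le> 1"
proof (cases "d = 0")
  case True then show ?thesis by simp
next
  case False
  then have "real d \<ge> 1" by simp
  then show ?thesis using assms by (simp add: divide_le_eq)
qed

lemma Yr_bounds: "0 \<le> Yr n k \<and> Yr n k \<le> 1"
  by (induction k) (simp_all add: step_bounds)

lemma Zr_bounds: "0 \<le> Zr n k \<and> Zr n k \<le> 1"
  by (induction k) (simp_all add: step_bounds)

lemma Yv_bounds: "0 \<le> Yv n k \<and> Yv n k \<le> 1"
  using Yr_bounds by (simp add: Yv_def)

lemma Zv_bounds: "0 \<le> Zv n k \<and> Zv n k \<le> 1"
  using Zr_bounds by (simp add: Zv_def)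

lemma Y_rec: "Suc k < n \<Longrightarrow> Yv n k + real (n - k) * Yv n (k + 1) = 1"
  by (simp add: Yv_def)

lemma Z_rec_le: "k \<le> n \<Longrightarrow> Zv n k + real k * Zv n (k - 1) \<le> 1"
proof -
  assume kn: "k \<le> n"
  show ?thesis
  proof (cases "k = 0")
    case True then show ?thesis using Zv_bounds by simp
  next
    case False
    show ?thesis
    proof (cases "k = n")
      case True
      then show ?thesis using False by (simp add: Zv_def)
    next
      case False': False
      then have kn': "k < n" using kn by simp
      have e: "n - 1 - (k - 1) = Suc (n - 1 - k)" using kn' False by simp
      have e2: "n - 1 - (n - 1 - k) = k" using kn' by simp
      have nk: "\<not> n \<le> k - 1" "\<not> n \<le> k" using kn' by auto
      have "Zv n (k - 1) = Zr n (Suc (n - 1 - k))"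
        by (simp only: Zv_def if_not_P[OF nk(1)] e)
      also have "\<dots> = (1 - Zr n (n - 1 - k)) / real (n - 1 - (n - 1 - k))"
        by (simp only: Zr.simps)
      also have "\<dots> = (1 - Zv n k) / real k"
        by (simp only: Zv_def if_not_P[OF nk(2)] e2)
      finally have "Zv n (k - 1) = (1 - Zv n k) / real k" .
      then show ?thesis using False by simp
    qed
  qed
qed

lemma Z_rec_eq: "1 \<le> k \<Longrightarrow> k \<le> n \<Longrightarrow> Zv n k + real k * Zv n (k - 1) = 1"
proof -
  assume k1: "1 \<le> k" and kn: "k \<le> n"
  show ?thesis
  proof (cases "k = n")
    case True
    then show ?thesis using k1 by (simp add: Zv_def)
  next
    case False
    then have kn': "k < n" using kn by simp
    have e: "n - 1 - (k - 1) = Suc (n - 1 - k)" using kn' k1 by simp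
    have e2: "n - 1 - (n - 1 - k) = k" using kn' by simp
    have nk: "\<not> n \<le> k - 1" "\<not> n \<le> k" using kn' by auto
    have "Zv n (k - 1) = Zr n (Suc (n - 1 - k))"
      by (simp only: Zv_def if_not_P[OF nk(1)] e)
    also have "\<dots> = (1 - Zr n (n - 1 - k)) / real (n - 1 - (n - 1 - k))"
      by (simp only: Zr.simps)
    also have "\<dots> = (1 - Zv n k) / real k"
      by (simp only: Zv_def if_not_P[OF nk(2)] e2)
    finally have "Zv n (k - 1) = (1 - Zv n k) / real k" .
    then show ?thesis using k1 by simp
  qed
qed

lemma card_le: "u \<in> Pow {..<n} \<Longrightarrow> card u \<le> n"
  using card_mono[of "{..<n}" u] by simp

lemma lower_bound:
  assumes "lp_feasible n x"
  shows "(\<Sum>v\<in>Pow {..<n}. Zv n (card v)) \<le> lp_objective n x"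
proof -
  let ?c = "\<lambda>u. Zv n (card u) + real (card u) * Zv n (card u - 1)"
  let ?up = "\<lambda>v. {u\<in>Pow {..<n}. v \<subseteq> u \<and> hamming_dist u v = 1}"
  have x0: "\<And>u. u \<in> Pow {..<n} \<Longrightarrow> 0 \<le> x u" using assms by (simp add: lp_feasible_def)
  have cons: "\<And>v. v \<in> Pow {..<n} \<Longrightarrow> 1 \<le> x v + (\<Sum>u\<in>?up v. x u)"
    using assms unfolding lp_feasible_def by blast
  have "(\<Sum>v\<in>Pow {..<n}. Zv n (card v)) \<le> (\<Sum>v\<in>Pow {..<n}. Zv n (card v) * (x v + (\<Sum>u\<in>?up v. x u)))"
  proof (rule sum_mono)
    fix v assume "v \<in> Pow {..<n}"
    then show "Zv n (card v) \<le> Zv n (card v) * (x v + (\<Sum>u\<in>?up v. x u))"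
      using cons[of v] Zv_bounds[of n "card v"] mult_left_mono[of 1 _ "Zv n (card v)"] by simp
  qed
  also have "\<dots> = (\<Sum>u\<in>Pow {..<n}. x u * ?c u)"
    by (rule key_identity[symmetric])
  also have "\<dots> \<le> (\<Sum>u\<in>Pow {..<n}. x u)"
  proof (rule sum_mono)
    fix u assume u: "u \<in> Pow {..<n}"
    have "?c u \<le> 1" using Z_rec_le card_le[OF u] by simp
    then show "x u * ?c u \<le> x u" using x0[OF u] mult_left_mono[of "?c u" 1 "x u"] by simp
  qed
  finally show ?thesis by (simp add: lp_objective_def)
qed

lemma xs_feasible:
  assumes "n \<ge> 1"
  shows "lp_feasible n (\<lambda>u. Yv n (card u))"
  unfolding lp_feasible_def
proof (intro conjI ballI)
  fix u show "0 \<le> Yv n (card u)" "Yv n (card u) \<le> 1" using Yv_bounds by auto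
next
  fix v assume v: "v \<in> Pow {..<n}"
  have cv: "card v \<le> n" using card_le[OF v] .
  have "(\<Sum>u\<in>{u\<in>Pow {..<n}. v \<subseteq> u \<and> hamming_dist u v = 1}. Yv n (card u))
       = real (n - card v) * Yv n (card v + 1)"
    by (rule sum_up) (use v in simp)
  moreover have "1 \<le> Yv n (card v) + real (n - card v) * Yv n (card v + 1)"
  proof -
    consider "Suc (card v) < n" | "Suc (card v) = n" | "card v = n" using cv by linarith
    then show ?thesis
    proof cases
      case 1 then show ?thesis using Y_rec by simp
    next
      case 2 then show ?thesis using Yv_bounds[of n "card v"] by (simp add: Yv_def)
    next
      case 3 then show ?thesis by (simp add: Yv_def)
    qed
  qed
  ultimately show "1 \<le> Yv n (card v) + (\<Sum>u\<in>{u\<in>Pow {..<n}. v \<subseteq> u \<and> hamming_dist u v = 1}. Yv n (card u))"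
    by simp
qed

lemma xs_value:
  assumes "n \<ge> 1"
  shows "lp_objective n (\<lambda>u. Yv n (card u)) = (\<Sum>v\<in>Pow {..<n}. Zv n (card v))"
proof -
  let ?x = "\<lambda>u. Yv n (card u)"
  let ?c = "\<lambda>u. Zv n (card u) + real (card u) * Zv n (card u - 1)"
  let ?up = "\<lambda>v. {u\<in>Pow {..<n}. v \<subseteq> u \<and> hamming_dist u v = 1}"
  have "lp_objective n ?x = (\<Sum>u\<in>Pow {..<n}. ?x u * ?c u)"
    unfolding lp_objective_def
  proof (rule sum.cong[OF refl])
    fix u assume u: "u \<in> Pow {..<n}"
    show "?x u = ?x u * ?c u"
    proof (cases "card u = 0")
      case True then show ?thesis using assms by (simp add: Yv_def)
    next
      case False
      then have "?c u = 1" using Z_rec_eq card_le[OF u] by simp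
      then show ?thesis by simp
    qed
  qed
  also have "\<dots> = (\<Sum>v\<in>Pow {..<n}. Zv n (card v) * (?x v + (\<Sum>u\<in>?up v. ?x u)))"
    by (rule key_identity)
  also have "\<dots> = (\<Sum>v\<in>Pow {..<n}. Zv n (card v))"
  proof (rule sum.cong[OF refl])
    fix v assume v: "v \<in> Pow {..<n}"
    have cv: "card v \<le> n" using card_le[OF v] .
    have s: "(\<Sum>u\<in>?up v. ?x u) = real (n - card v) * Yv n (card v + 1)"
      by (rule sum_up) (use v in simp)
    consider "Suc (card v) < n" | "Suc (card v) = n" | "card v = n" using cv by linarith
    then show "Zv n (card v) * (?x v + (\<Sum>u\<in>?up v. ?x u)) = Zv n (card v)"
    proof cases
      case 1 then show ?thesis using Y_rec s by simp
    next
      case 2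
      then have "Zv n (card v) = 0" by (simp add: Zv_def)
      then show ?thesis by simp
    next
      case 3 then show ?thesis using s by (simp add: Yv_def)
    qed
  qed
  finally show ?thesis .
qed

lemma obj_closed:
  assumes "n \<ge> 1"
  shows "lp_objective n (\<lambda>u. Yv n (card u)) = 1 + (\<Sum>k<n. of_nat (n choose k) * Yr n k)"
proof -
  have "lp_objective n (\<lambda>u. Yv n (card u)) = (\<Sum>k\<le>n. of_nat (n choose k) * Yv n k)"
    unfolding lp_objective_def by (rule sum_card)
  also have "{..n} = insert n {..<n}" by auto
  also have "(\<Sum>k\<in>insert n {..<n}. of_nat (n choose k) * Yv n k) = 1 + (\<Sum>k<n. of_nat (n choose k) * Yv n k)"
    by (simp add: Yv_def)
  also have "(\<Sum>k<n. of_nat (n choose k) * Yv n k) = (\<Sum>k<n. of_nat (n choose k) * Yr n k)"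
    by (rule sum.cong) (auto simp: Yv_def)
  finally show ?thesis .
qed

theorem theorem2:
  fixes n :: nat
  assumes "n \<ge> 1"
  shows "E n = (-1) ^ n * fact n * (R n 2 - R n 1 * R (n - 1) 1)"
proof -
  let ?x = "\<lambda>u. Yv n (card u)"
  have "E n = lp_objective n ?x"
    unfolding E_def
  proof (rule cInf_eq_minimum)
    show "lp_objective n ?x \<in> lp_objective n ` {x. lp_feasible n x}"
      using xs_feasible[OF assms] by blast
  next
    fix y assume "y \<in> lp_objective n ` {x. lp_feasible n x}"
    then obtain x where "lp_feasible n x" "y = lp_objective n x" by blast
    then show "lp_objective n ?x \<le> y"
      using lower_bound xs_value[OF assms] by simp
  qed
  also have "\<dots> = (-1) ^ n * fact n * (R n 2 - R n 1 * R (n - 1) 1)"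
    using obj_closed[OF assms] final_identity[OF assms] by simp
  finally show ?thesis .
qed

end
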